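(* Let $n\in\mathbb{Z}$ with $|n|\geq1$, $\alpha>0$, $\kappa<\alpha^{-1}$ and $\beta>0$. If $$R>\left(\frac{12\,(1+n^2(2\ln 2-1))}{\alpha^{-1}-\kappa}\right)^{1/2},$$ then there exists $u_0\in H$ such that $\|u_0\|_H^2>\beta$ and $\mathcal{I}_\kappa(u_0)<0$.
   Context: $H$ is the completion of $X=\{u\in C^1[0,R]: u(0)=0=u(R)\}$ with respect to the inner product $(u,\tilde u)=\int_0^R\left\{ru_r\tilde u_r+\frac1r u\tilde u\right\}dr$, and $\|\cdot\|_H$ is the induced norm. The functional $\mathcal{I}_\kappa:H\to\mathbb{R}$ is $$\mathcal{I}_\kappa(u)=\frac12\int_0^R\left\{ru_r^2+\frac{n^2}{r}u^2-2(\alpha^{-1}-\kappa)ru^2+2\alpha^{-2}r\ln(1+\alpha u^2)\right\}dr.$$ *)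

theory Defs
  imports "HOL-Analysis.Analysis"
begin

definition inX :: "real \<Rightarrow> (real \<Rightarrow> real) \<Rightarrow> (real \<Rightarrow> real) \<Rightarrow> bool" where
  "inX R u u' \<longleftrightarrow> continuous_on {0..R} u'
     \<and> (\<forall>x\<in>{0..R}. (u has_real_derivative u' x) (at x within {0..R}))
     \<and> u 0 = 0 \<and> u R = 0"

text \<open>Squared H-distance between (u,v) and (w,z), where the second component plays
  the role of the (weak) derivative; valued in ennreal so that it is always defined.\<close>
definition distH2 :: "real \<Rightarrow> (real \<Rightarrow> real) \<Rightarrow> (real \<Rightarrow> real) \<Rightarrow> (real \<Rightarrow> real) \<Rightarrow> (real \<Rightarrow> real) \<Rightarrow> ennreal" where
  "distH2 R u v w z = (\<integral>\<^sup>+ r\<in>{0<..<R}. ennreal (r * (v r - z r)^2 + (u r - w r)^2 / r) \<partial>lborel)"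

text \<open>H = completion of X: pairs (u, u_r) of measurable functions which are H-limits of
  elements of X.\<close>
definition inH :: "real \<Rightarrow> (real \<Rightarrow> real) \<Rightarrow> (real \<Rightarrow> real) \<Rightarrow> bool" where
  "inH R u v \<longleftrightarrow> u \<in> borel_measurable lborel \<and> v \<in> borel_measurable lborel
     \<and> (\<exists>uk vk. (\<forall>k::nat. inX R (uk k) (vk k))
          \<and> ((\<lambda>k. distH2 R (uk k) (vk k) u v) \<longlonglongrightarrow> 0))"

definition normH2 :: "real \<Rightarrow> (real \<Rightarrow> real) \<Rightarrow> (real \<Rightarrow> real) \<Rightarrow> real" where
  "normH2 R u v = (LINT r:{0<..<R}|lborel. r * (v r)^2 + (u r)^2 / r)"

definition Ikappa :: "int \<Rightarrow> real \<Rightarrow> real \<Rightarrow> real \<Rightarrow> (real \<Rightarrow> real) \<Rightarrow> (real \<Rightarrow> real) \<Rightarrow> real" where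
  "Ikappa n \<alpha> \<kappa> R u v = (1/2) * (LINT r:{0<..<R}|lborel.
      r * (v r)^2 + (real_of_int n)^2 / r * (u r)^2 - 2 * (1/\<alpha> - \<kappa>) * r * (u r)^2
      + 2 * (1/\<alpha>^2) * r * ln (1 + \<alpha> * (u r)^2))"

end

theory Submission
  imports Defs
begin
lemma lint_ftc:
  fixes f F :: "real \<Rightarrow> real"
  assumes "a \<le> b" "continuous_on {a..b} f"
    "\<And>x. a \<le> x \<Longrightarrow> x \<le> b \<Longrightarrow> (F has_real_derivative f x) (at x within {a..b})"
  shows "(LINT x:{a<..<b}|lborel. f x) = F b - F a"
proof -
  have "(LBINT x=ereal a..ereal b. f x) = F b - F a"
    apply (rule interval_integral_FTC_finite)
    using assms by (auto simp: min_def max_def has_real_derivative_iff_has_vector_derivative[symmetric])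
  thus ?thesis using assms(1) by (simp add: interval_lebesgue_integral_def)
qed
lemma sint:
  fixes f :: "real \<Rightarrow> real"
  assumes "continuous_on {a..b} f"
  shows "set_integrable lborel {a<..<b} f"
  by (rule set_integrable_subset[OF borel_integrable_atLeastAtMost'[OF assms]]) auto

theorem lemma2p2:
  fixes n :: int and \<alpha> \<kappa> \<beta> R :: real
  assumes "\<bar>n\<bar> \<ge> 1" and "\<alpha> > 0" and "\<kappa> < 1/\<alpha>" and "\<beta> > 0"
    and "R > sqrt (12 * (1 + (real_of_int n)^2 * (2 * ln 2 - 1)) / (1/\<alpha> - \<kappa>))"
  shows "\<exists>u v. inH R u v \<and> normH2 R u v > \<beta> \<and> Ikappa n \<alpha> \<kappa> R u v < 0"
proof -
  define c where "c = 1/\<alpha> - \<kappa>"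
  define N where "N = (real_of_int n)^2"
  have c: "c > 0" using assms(3) by (simp add: c_def)
  have N: "N \<ge> 0" by (simp add: N_def)
  have l2: "2/3 \<le> ln (2::real)" by (rule ln2_ge_two_thirds)
  have X: "12 * (1 + N * (2 * ln 2 - 1)) / c \<ge> 0" using N l2 c by auto
  have R0: "R > 0" using assms(5) X c_def N_def
    by (metis real_sqrt_ge_zero order.strict_trans1)
  have "R^2 > 12 * (1 + N * (2 * ln 2 - 1)) / c"
  proof -
    let ?x = "12 * (1 + N * (2 * ln 2 - 1)) / c"
    have "sqrt ?x < R" using assms(5) unfolding c_def[symmetric] N_def[symmetric] .
    hence "(sqrt ?x)^2 < R^2" using X by (intro power_strict_mono) auto
    thus ?thesis using X by simp
  qed
  hence "c * R^2 > 12 * (1 + N * (2 * ln 2 - 1))" using c by (simp add: field_simps)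
  moreover have "12 * (1 + N * (2 * ln 2 - 1)) \<ge> 12 + 4 * N" using N l2
  proof -
    have "N * (1/3) \<le> N * (2 * ln 2 - 1)" using N l2 by (intro mult_left_mono) auto
    thus ?thesis by (simp add: algebra_simps)
  qed
  ultimately have cR: "c * R^2 > 12 + 4 * N" by linarith
  define D where "D = 2*c*R^8/168 - R^6/10 - N*R^6/60"
  have D: "D > 0"
  proof -
    have "2*c*R^8/168 = (c*R^2) * R^6 / 84" by (simp add: power_def field_simps)
    also have "\<dots> > (12 + 4*N) * R^6/84" using cR R0 by (simp add: divide_strict_right_mono)
    finally have "2*c*R^8/168 > R^6/7 + N*R^6/21" by (simp add: algebra_simps)
    moreover have "R^6 > 0" "N*R^6 \<ge> 0" using R0 N by auto
    ultimately show ?thesis unfolding D_def by linarith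
  qed
  define K where "K = R^2/\<alpha>^2"
  define L where "L = \<alpha> * R^6"
  define M where "M = 7 * R^6/60"
  have K: "K > 0" and L: "L > 0" and M: "M > 0" using R0 assms(2) by (auto simp: K_def L_def M_def)
  define t where "t = 1 + \<beta>/M + K*(ln(1+L)+2)/D"
  have t1: "t \<ge> 1" using K L D M assms(4) unfolding t_def
    by (smt (verit) divide_nonneg_pos ln_ge_zero mult_nonneg_nonneg)
  have tM: "t * M > \<beta>"
  proof -
    have "t > \<beta>/M" using K L D unfolding t_def
      by (smt (verit) divide_nonneg_pos ln_ge_zero mult_nonneg_nonneg)
    thus ?thesis using M by (simp add: field_simps)
  qed
  have tD: "t * D > K*(ln(1+L)+2)"
  proof -
    have "t > K*(ln(1+L)+2)/D" using K L M assms(4) unfolding t_def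
      by (smt (verit) divide_nonneg_pos ln_ge_zero mult_nonneg_nonneg)
    thus ?thesis using D by (simp add: field_simps)
  qed
  define u0 where "u0 = (\<lambda>r::real. r^2*(R-r))"
  define v0 where "v0 = (\<lambda>r::real. 2*R*r - 3*r^2)"
  define u where "u = (\<lambda>r. t * u0 r)"
  define v where "v = (\<lambda>r. t * v0 r)"
  have uX: "inX R u v"
    unfolding inX_def u_def v_def u0_def v0_def
    apply (intro conjI ballI)
       apply (intro continuous_intros)
      apply (rule derivative_eq_intros refl | simp)+
     apply (simp add: algebra_simps power2_eq_square)
    by simp_all
  have uH: "inH R u v"
    unfolding inH_def
    apply (intro conjI)
      apply (unfold u_def v_def u0_def v0_def)[2]
      apply measurable
    apply (rule exI[of _ "\<lambda>k::nat. u"], rule exI[of _ "\<lambda>k::nat. v"])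
    using uX by (simp add: distH2_def)
  have eqN: "(\<lambda>r. r * (v r)^2 + (u r)^2 / r) = (\<lambda>r. t^2 * (5*R^2*r^3 - 14*R*r^4 + 10*r^5))"
  proof
    fix r :: real
    show "r * (v r)^2 + (u r)^2 / r = t^2 * (5*R^2*r^3 - 14*R*r^4 + 10*r^5)"
      unfolding u_def v_def u0_def v0_def
      by (cases "r = 0") (simp_all add: field_simps eval_nat_numeral)
  qed
  have normval: "normH2 R u v = t^2 * M"
    unfolding normH2_def eqN
    apply (subst lint_ftc[where F = "\<lambda>r. t^2 * (5*R^2*r^4/4 - 14*R*r^5/5 + 10*r^6/6)"])
    using R0 apply simp
      apply (intro continuous_intros)
     apply (rule derivative_eq_intros refl | simp)+
     apply (simp add: algebra_simps)
    by (simp add: M_def field_simps eval_nat_numeral)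
  have norm: "normH2 R u v > \<beta>"
  proof -
    have "t * M \<le> t^2 * M" using t1 M by (simp add: power2_eq_square)
    thus ?thesis using normval tM by linarith
  qed
  define \<Lambda> where "\<Lambda> = ln (1 + L * t^2)"
  define P where "P = (\<lambda>r::real. 4*R^2*r^3 - 12*R*r^4 + 9*r^5 + N*(R^2*r^3 - 2*R*r^4 + r^5)
      - 2*c*(R^2*r^5 - 2*R*r^6 + r^7))"
  define h where "h = (\<lambda>r. t^2 * P r + 2*(1/\<alpha>^2)*r*ln(1+\<alpha>*(u r)^2))"
  define g where "g = (\<lambda>r. t^2 * P r + 2*(1/\<alpha>^2)*r*\<Lambda>)"
  have eqI: "(\<lambda>r. r * (v r)^2 + (real_of_int n)^2 / r * (u r)^2 - 2 * (1/\<alpha> - \<kappa>) * r * (u r)^2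
      + 2 * (1/\<alpha>^2) * r * ln (1 + \<alpha> * (u r)^2)) = h"
  proof
    fix r :: real
    show "r * (v r)^2 + (real_of_int n)^2 / r * (u r)^2 - 2 * (1/\<alpha> - \<kappa>) * r * (u r)^2
      + 2 * (1/\<alpha>^2) * r * ln (1 + \<alpha> * (u r)^2) = h r"
      unfolding h_def P_def c_def[symmetric] N_def[symmetric]
      unfolding u_def v_def u0_def v0_def
      by (cases "r = 0") (simp_all add: field_simps eval_nat_numeral)
  qed
  have pos: "1 + \<alpha> * (u r)^2 > 0" for r using assms(2) by (smt (verit) mult_nonneg_nonneg zero_le_power2)
  have hint: "set_integrable lborel {0<..<R} h"
    unfolding h_def P_def u_def u0_def
    apply (rule sint)
    apply (intro continuous_intros)
    using pos unfolding u_def u0_def by (metis less_irrefl)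
  have gint: "set_integrable lborel {0<..<R} g"
    unfolding g_def P_def by (rule sint) (intro continuous_intros)
  have hg: "h r \<le> g r" if r: "r \<in> {0<..<R}" for r
  proof -
    have "u0 r \<le> R^3" "u0 r \<ge> 0" using r unfolding u0_def
      by (auto simp: power3_eq_cube power2_eq_square intro!: mult_mono)
    hence "(u0 r)^2 \<le> (R^3)^2" by (intro power_mono) auto
    hence "\<alpha>*(u r)^2 \<le> L * t^2" unfolding u_def L_def using assms(2)
      by (simp add: power_mult_distrib power_mult[symmetric] mult_left_mono mult.commute mult.left_commute)
    hence "ln(1+\<alpha>*(u r)^2) \<le> \<Lambda>" unfolding \<Lambda>_def using pos[of r] by simp
    thus ?thesis unfolding h_def g_def using r assms(2) by (simp add: mult_left_mono divide_right_mono)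
  qed
  have anz: "\<alpha> \<noteq> 0" using assms(2) by simp
  have RR: "R^2*R^4 = R^6" "R*R^5 = R^6" "R^2*R^6 = R^8" "R*R^7 = R^8"
    by (simp_all add: power_add[symmetric] flip: power_Suc)
  have gval: "(LINT r:{0<..<R}|lborel. g r) = K * \<Lambda> - t^2 * D"
    unfolding g_def P_def
    apply (subst lint_ftc[where F = "\<lambda>r. t^2 * (R^2*r^4 - 12*R*r^5/5 + 3*r^6/2 + N*(R^2*r^4/4 - 2*R*r^5/5 + r^6/6)
        - 2*c*(R^2*r^6/6 - 2*R*r^7/7 + r^8/8)) + \<Lambda>*r^2/\<alpha>^2"])
    using R0 apply simp
      apply (intro continuous_intros)
     apply (rule derivative_eq_intros refl | simp add: anz)+
     apply (simp add: field_simps anz eval_nat_numeral)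
    by (simp add: D_def K_def RR field_simps) (simp only: RR(2,4)[symmetric] mult_ac)
  have lam: "\<Lambda> \<le> ln (1+L) + 2*t"
  proof -
    have "1 + L*t^2 \<le> (1+L)*(1+t)^2" using L t1 by (simp add: algebra_simps power2_eq_square)
    hence "\<Lambda> \<le> ln ((1+L)*(1+t)^2)" unfolding \<Lambda>_def using L t1
      by (subst ln_le_cancel_iff) (auto intro: add_pos_nonneg)
    also have "\<dots> = ln (1+L) + 2 * ln (1+t)" using L t1 by (simp add: ln_mult ln_realpow)
    also have "ln (1+t) \<le> t" using t1 by (smt (verit) ln_le_minus_one)
    finally show ?thesis by linarith
  qed
  have "K * \<Lambda> \<le> K * (ln (1+L) + 2) * t"
  proof -
    have "K*\<Lambda> \<le> K*(ln (1+L) + 2*t)" using lam K by simp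
    also have "\<dots> \<le> K * (ln (1+L) + 2) * t"
      using K t1 L ln_ge_zero[of "1+L"] by (simp add: algebra_simps mult_left_mono)
    finally show ?thesis .
  qed
  also have "\<dots> < t * D * t" using tD t1 by (simp add: mult.commute)
  finally have neg: "K * \<Lambda> - t^2 * D < 0" by (simp add: power2_eq_square algebra_simps)
  have "Ikappa n \<alpha> \<kappa> R u v < 0"
    unfolding Ikappa_def eqI
    using set_integral_mono[OF hint gint hg] gval neg by simp
  thus ?thesis using uH norm by blast
qed

end
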